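(* Let $\tau = \{t \mid t \subseteq \Omega \}$, $\tau_{b} = \{t \mid \emptyset \neq t \subseteq \Omega, I_{\phi(t,f)} \geq b \}$, and $\phi$ a decomposable probability-of-success metric. Then for $b \geq 3$, \[ \frac{|\tau_{b}|}{|\tau|} \leq 2^{-b}. \]
   Context: Algorithmic search framework: finite discrete search space $\Omega$, target set $t\subseteq\Omega$ with indicator vector $\mathbf{t}$, fixed information resource $f$, and a search algorithm $\mathcal{A}$. A probability-of-success metric $\phi$ is decomposable if there exists a probability vector $\mathbf{P}_{\phi,f}$ over $\Omega$, not a function of $t$, with $\phi(t,f)=\mathbf{t}^{\top}\mathbf{P}_{\phi,f}=P_\phi(X\in t\mid f)$. The active information of expectations is $I_{\phi(t,f)} := -\log_2\frac{p}{\phi(t,f)}$, where $p=|t|/|\Omega|$ is the per-query success probability of uniform random sampling with replacement. *)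

theory Defs
  imports Complex_Main
begin

definition prob_vector :: "'a set \<Rightarrow> ('a \<Rightarrow> real) \<Rightarrow> bool" where
  "prob_vector \<Omega> P \<longleftrightarrow> (\<forall>x\<in>\<Omega>. P x \<ge> 0) \<and> (\<Sum>x\<in>\<Omega>. P x) = 1"

definition decomposable :: "'a set \<Rightarrow> ('a set \<Rightarrow> 'f \<Rightarrow> real) \<Rightarrow> 'f \<Rightarrow> bool" where
  "decomposable \<Omega> \<phi> f \<longleftrightarrow>
     (\<exists>P. prob_vector \<Omega> P \<and> (\<forall>t. t \<subseteq> \<Omega> \<longrightarrow> \<phi> t f = (\<Sum>x\<in>t. P x)))"

definition unif_p :: "'a set \<Rightarrow> 'a set \<Rightarrow> real" where
  "unif_p \<Omega> t = real (card t) / real (card \<Omega>)"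

definition active_info :: "'a set \<Rightarrow> ('a set \<Rightarrow> 'f \<Rightarrow> real) \<Rightarrow> 'f \<Rightarrow> 'a set \<Rightarrow> real" where
  "active_info \<Omega> \<phi> f t = - log 2 (unif_p \<Omega> t / \<phi> t f)"

text \<open>tau_b. The condition phi(t,f) > 0 makes explicit that for phi(t,f) = 0 the active
  information is -infinity, hence never >= b.\<close>
definition tau_b :: "'a set \<Rightarrow> ('a set \<Rightarrow> 'f \<Rightarrow> real) \<Rightarrow> 'f \<Rightarrow> real \<Rightarrow> 'a set set" where
  "tau_b \<Omega> \<phi> f b = {t. t \<noteq> {} \<and> t \<subseteq> \<Omega> \<and> \<phi> t f > 0 \<and> active_info \<Omega> \<phi> f t \<ge> b}"

end

theory Submission
  imports Defs
begin

definition sw :: "'a \<Rightarrow> 'a \<Rightarrow> 'a \<Rightarrow> 'a" where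
  "sw x y z = (if z = x then y else if z = y then x else z)"

lemma sw_inv: "sw x y (sw x y z) = z"
  by (auto simp: sw_def)

lemma sw_img_inv: "sw x y ` sw x y ` t = t"
  by (simp add: image_image sw_inv)

lemma sw_inj: "inj (sw x y)"
  by (metis injI sw_inv)

lemma c_sym:
  fixes \<Omega> :: "'a set"
  assumes "x \<in> \<Omega>" "y \<in> \<Omega>"
  shows "(\<Sum>t\<in>{t\<in>Pow \<Omega> - {{}}. x \<in> t}. 1 / real (card t))
       = (\<Sum>t\<in>{t\<in>Pow \<Omega> - {{}}. y \<in> t}. 1 / real (card t))"
proof -
  have sub: "sw x y ` t \<subseteq> \<Omega>" if "t \<subseteq> \<Omega>" for t
    using that assms by (auto simp: sw_def)
  have bij: "bij_betw (image (sw x y)) {t\<in>Pow \<Omega> - {{}}. x \<in> t} {t\<in>Pow \<Omega> - {{}}. y \<in> t}"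
  proof (rule bij_betw_byWitness[where f' = "image (sw x y)"])
    show "\<forall>a\<in>{t \<in> Pow \<Omega> - {{}}. x \<in> t}. sw x y ` sw x y ` a = a" by (simp add: sw_img_inv)
    show "\<forall>a'\<in>{t \<in> Pow \<Omega> - {{}}. y \<in> t}. sw x y ` sw x y ` a' = a'" by (simp add: sw_img_inv)
    show "image (sw x y) ` {t \<in> Pow \<Omega> - {{}}. x \<in> t} \<subseteq> {t \<in> Pow \<Omega> - {{}}. y \<in> t}"
    proof
      fix s assume "s \<in> image (sw x y) ` {t \<in> Pow \<Omega> - {{}}. x \<in> t}"
      then obtain t where "t \<subseteq> \<Omega>" "x \<in> t" "s = sw x y ` t" by auto
      moreover have "sw x y x = y" by (simp add: sw_def)
      ultimately have "y \<in> s" "s \<subseteq> \<Omega>" using sub by (metis imageI, simp)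
      then show "s \<in> {t \<in> Pow \<Omega> - {{}}. y \<in> t}" by blast
    qed
    show "image (sw x y) ` {t \<in> Pow \<Omega> - {{}}. y \<in> t} \<subseteq> {t \<in> Pow \<Omega> - {{}}. x \<in> t}"
    proof
      fix s assume "s \<in> image (sw x y) ` {t \<in> Pow \<Omega> - {{}}. y \<in> t}"
      then obtain t where "t \<subseteq> \<Omega>" "y \<in> t" "s = sw x y ` t" by auto
      moreover have "sw x y y = x" by (simp add: sw_def)
      ultimately have "x \<in> s" "s \<subseteq> \<Omega>" using sub by (metis imageI, simp)
      then show "s \<in> {t \<in> Pow \<Omega> - {{}}. x \<in> t}" by blast
    qed
  qed
  have "(\<Sum>t\<in>{t\<in>Pow \<Omega> - {{}}. y \<in> t}. 1 / real (card t))
      = (\<Sum>t\<in>{t\<in>Pow \<Omega> - {{}}. x \<in> t}. 1 / real (card (sw x y ` t)))"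
    using sum.reindex_bij_betw[OF bij, of "\<lambda>t. 1 / real (card t)"] by simp
  also have "\<dots> = (\<Sum>t\<in>{t\<in>Pow \<Omega> - {{}}. x \<in> t}. 1 / real (card t))"
    by (rule sum.cong[OF refl]) (metis card_image sw_inj inj_on_subset subset_UNIV)
  finally show ?thesis by simp
qed

theorem theorem2:
  fixes \<Omega> :: "'a set" and \<phi> :: "'a set \<Rightarrow> 'f \<Rightarrow> real" and f :: 'f and b :: real
  assumes "finite \<Omega>" and "\<Omega> \<noteq> {}"
    and "decomposable \<Omega> \<phi> f"
    and "b \<ge> 3"
  shows "real (card (tau_b \<Omega> \<phi> f b)) / real (card (Pow \<Omega>)) \<le> 2 powr (- b)"
proof -
  obtain P where P: "\<forall>x\<in>\<Omega>. P x \<ge> 0" "(\<Sum>x\<in>\<Omega>. P x) = 1"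
    and phi: "\<And>t. t \<subseteq> \<Omega> \<Longrightarrow> \<phi> t f = (\<Sum>x\<in>t. P x)"
    using assms(3) unfolding decomposable_def prob_vector_def by blast
  define N where "N = real (card \<Omega>)"
  define M where "M = 2 powr b"
  define S where "S = Pow \<Omega> - {{}}"
  have Npos: "N > 0" using assms(1,2) by (simp add: N_def card_gt_0_iff)
  have Mpos: "M > 0" by (simp add: M_def)
  have finS: "finite S" using assms(1) by (simp add: S_def)
  define g where "g t = N * (\<Sum>x\<in>t. P x) / (M * real (card t))" for t
  have g_nn: "g t \<ge> 0" if "t \<in> S" for t
  proof -
    have "(\<Sum>x\<in>t. P x) \<ge> 0" using that P(1) by (intro sum_nonneg) (auto simp: S_def)
    then show ?thesis using Npos Mpos by (simp add: g_def)
  qed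
  have sub: "tau_b \<Omega> \<phi> f b \<subseteq> S" by (auto simp: tau_b_def S_def)
  have key: "1 \<le> g t" if "t \<in> tau_b \<Omega> \<phi> f b" for t
  proof -
    from that have t: "t \<noteq> {}" "t \<subseteq> \<Omega>" "\<phi> t f > 0" "active_info \<Omega> \<phi> f t \<ge> b"
      by (auto simp: tau_b_def)
    have ft: "finite t" using t(2) assms(1) finite_subset by blast
    have ct: "real (card t) > 0" using ft t(1) by (simp add: card_gt_0_iff)
    have ppos: "unif_p \<Omega> t / \<phi> t f > 0" using ct Npos t(3) by (simp add: unif_p_def N_def)
    have "log 2 (unif_p \<Omega> t / \<phi> t f) \<le> - b" using t(4) by (simp add: active_info_def)
    then have "unif_p \<Omega> t / \<phi> t f \<le> 2 powr (- b)" using ppos by (simp add: log_le_iff)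
    also have "\<dots> = 1 / M" by (simp add: M_def powr_minus divide_inverse)
    finally have "real (card t) / N / \<phi> t f \<le> 1 / M" by (simp add: unif_p_def N_def)
    then have "M * real (card t) \<le> N * \<phi> t f"
      using Npos Mpos t(3) by (simp add: field_simps)
    then show ?thesis using phi[OF t(2)] Mpos ct by (simp add: g_def field_simps)
  qed
  have "real (card (tau_b \<Omega> \<phi> f b)) = (\<Sum>t\<in>tau_b \<Omega> \<phi> f b. 1)" by simp
  also have "\<dots> \<le> (\<Sum>t\<in>tau_b \<Omega> \<phi> f b. g t)" by (rule sum_mono) (rule key)
  also have "\<dots> \<le> (\<Sum>t\<in>S. g t)"
    using sub finS g_nn by (intro sum_mono2) auto
  also have "(\<Sum>t\<in>S. g t) = N / M * (\<Sum>t\<in>S. \<Sum>x\<in>{x\<in>\<Omega>. x \<in> t}. P x / real (card t))"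
  proof -
    have "g t = N / M * (\<Sum>x\<in>{x\<in>\<Omega>. x \<in> t}. P x / real (card t))" if "t \<in> S" for t
    proof -
      have "{x\<in>\<Omega>. x \<in> t} = t" using that by (auto simp: S_def)
      then show ?thesis by (simp add: g_def sum_divide_distrib[symmetric])
    qed
    then show ?thesis by (simp add: sum_distrib_left)
  qed
  also have "(\<Sum>t\<in>S. \<Sum>x\<in>{x\<in>\<Omega>. x \<in> t}. P x / real (card t))
      = (\<Sum>x\<in>\<Omega>. \<Sum>t\<in>{t\<in>S. x \<in> t}. P x / real (card t))"
    by (rule sum.swap_restrict[OF finS assms(1)])
  also have "\<dots> = (\<Sum>x\<in>\<Omega>. P x * (\<Sum>t\<in>{t\<in>S. x \<in> t}. 1 / real (card t)))"
    by (simp add: sum_distrib_left)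
  finally have A: "real (card (tau_b \<Omega> \<phi> f b))
      \<le> N / M * (\<Sum>x\<in>\<Omega>. P x * (\<Sum>t\<in>{t\<in>S. x \<in> t}. 1 / real (card t)))" .
  obtain x0 where x0: "x0 \<in> \<Omega>" using assms(2) by blast
  define c where "c = (\<Sum>t\<in>{t\<in>S. x0 \<in> t}. 1 / real (card t))"
  have cx: "(\<Sum>t\<in>{t\<in>S. x \<in> t}. 1 / real (card t)) = c" if "x \<in> \<Omega>" for x
    unfolding c_def S_def using c_sym[OF that x0] by simp
  have "(\<Sum>x\<in>\<Omega>. \<Sum>t\<in>{t\<in>S. x \<in> t}. 1 / real (card t))
      = (\<Sum>t\<in>S. \<Sum>x\<in>{x\<in>\<Omega>. x \<in> t}. 1 / real (card t))"
    by (rule sum.swap_restrict[OF finS assms(1), symmetric])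
  also have "\<dots> = (\<Sum>t\<in>S. 1)"
  proof (rule sum.cong[OF refl])
    fix t assume "t \<in> S"
    then have e: "{x\<in>\<Omega>. x \<in> t} = t" and "t \<noteq> {}" "finite t"
      using assms(1) finite_subset by (auto simp: S_def)
    then have "card t > 0" by (simp add: card_gt_0_iff)
    then show "(\<Sum>x\<in>{x\<in>\<Omega>. x \<in> t}. 1 / real (card t)) = 1" by (simp add: e)
  qed
  also have "\<dots> = real (card S)" by simp
  also have "\<dots> \<le> 2 ^ card \<Omega>"
  proof -
    have "card S \<le> card (Pow \<Omega>)" using assms(1) by (intro card_mono) (auto simp: S_def)
    then show ?thesis using card_Pow[OF assms(1)] by (metis of_nat_le_iff of_nat_numeral of_nat_power)
  qed
  finally have "N * c \<le> 2 ^ card \<Omega>" using cx by (simp add: N_def)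
  moreover have "(\<Sum>x\<in>\<Omega>. P x * (\<Sum>t\<in>{t\<in>S. x \<in> t}. 1 / real (card t))) = c"
    using cx P(2) by (simp add: sum_distrib_right[symmetric])
  ultimately have "real (card (tau_b \<Omega> \<phi> f b)) \<le> 2 ^ card \<Omega> / M"
    using A Npos Mpos by (simp add: field_simps)
  then have "real (card (tau_b \<Omega> \<phi> f b)) / real (card (Pow \<Omega>)) \<le> 1 / M"
    using card_Pow[OF assms(1)] Mpos by (simp add: field_simps)
  also have "1 / M = 2 powr (- b)" by (simp add: M_def powr_minus divide_inverse)
  finally show ?thesis .
qed

end
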